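(* Let $m,n$ be positive integers, $\psi:[1,\infty)\to(0,\infty)$ non-increasing and continuous, and let $r=\mathcal D_{m,n}(\psi):[t_0,\infty)\to\mathbb R$. For $t\in\mathbb R$ let $f_t=\mathrm{diag}(e^{t/m},\dots,e^{t/m},e^{-t/n},\dots,e^{-t/n})\in SL_{m+n}(\mathbb R)$ ($m$ entries $e^{t/m}$, $n$ entries $e^{-t/n}$), and let $\Delta(\Lambda)=\max_{\mathbf v\in\Lambda\setminus\{0\}}\log(1/\|\mathbf v\|)$ for lattices $\Lambda\subset\mathbb R^{m+n}$. Then a unimodular lattice $\Lambda\subset\mathbb R^{m+n}$ is $(\psi,n)$-approximable if and only if there exist arbitrarily large $t>0$ with $\Delta(f_t\Lambda)\ge r(t)$. In particular, a matrix $A\in M_{m,n}(\mathbb R)$ is $\psi$-approximable if and only if there exist arbitrarily large $t>0$ with $\Delta(f_t\Lambda_A)\ge r(t)$.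
   Context: $\|\cdot\|$ is the max norm. For $\mathbf v\in\mathbb R^{m+n}$, $\mathbf v^{(m)}$ = first $m$ coordinates, $\mathbf v_{(n)}$ = last $n$ coordinates. $\Lambda$ is $(\psi,n)$-approximable if there exist $\mathbf v\in\Lambda$ with $\|\mathbf v_{(n)}\|$ arbitrarily large and $\|\mathbf v^{(m)}\|^m\le\psi(\|\mathbf v_{(n)}\|^n)$. $A\in M_{m,n}(\mathbb R)$ is $\psi$-approximable if there are infinitely many $\mathbf q\in\mathbb Z^n$ with $\|A\mathbf q+\mathbf p\|^m\le\psi(\|\mathbf q\|^n)$ for some $\mathbf p\in\mathbb Z^m$. $\Lambda_A=\begin{pmatrix}I_m&A\\0&I_n\end{pmatrix}\mathbb Z^{m+n}$. $\mathcal D_{m,n}(\psi)$ is the unique continuous function $r:[t_0,\infty)\to\mathbb R$, with $t_0=-\frac n{m+n}\log\psi(1)$, such that $t\mapsto t-nr(t)$ is strictly increasing and tends to $\infty$, $t\mapsto t+mr(t)$ is nondecreasing, and $\psi(e^{t-nr(t)})=e^{-t-mr(t)}$ for all $t\ge t_0$. *)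

theory Defs
  imports "HOL-Analysis.Analysis"
begin

text \<open>We model \<real>^(m+n) as real^('m + 'n), where m = CARD('m), n = CARD('n).
  Coordinates Inl i (i :: 'm) are the first m coordinates, Inr j (j :: 'n) the last n.\<close>

definition maxnorm :: "real ^ 'k \<Rightarrow> real" where
  "maxnorm v = Max (range (\<lambda>k. \<bar>v $ k\<bar>))"

definition upper_norm :: "real ^ ('m::finite + 'n::finite) \<Rightarrow> real" where
  "upper_norm v = Max (range (\<lambda>i::'m. \<bar>v $ Inl i\<bar>))"

definition lower_norm :: "real ^ ('m::finite + 'n::finite) \<Rightarrow> real" where
  "lower_norm v = Max (range (\<lambda>j::'n. \<bar>v $ Inr j\<bar>))"

definition int_vecs :: "(real ^ 'k) set" where
  "int_vecs = {z. \<forall>k. z $ k \<in> \<int>}"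

definition unimodular_lattice :: "(real ^ 'k::finite) set \<Rightarrow> bool" where
  "unimodular_lattice L \<longleftrightarrow>
     (\<exists>g :: real ^ 'k ^ 'k. \<bar>det g\<bar> = 1 \<and> L = (\<lambda>z. g *v z) ` int_vecs)"

definition psi_n_approximable ::
  "(real \<Rightarrow> real) \<Rightarrow> (real ^ ('m::finite + 'n::finite)) set \<Rightarrow> bool" where
  "psi_n_approximable \<psi> L \<longleftrightarrow>
     (\<forall>R. \<exists>v\<in>L. lower_norm v > R \<and>
        (upper_norm v) ^ CARD('m) \<le> \<psi> ((lower_norm v) ^ CARD('n)))"

definition psi_approximable_matrix ::
  "(real \<Rightarrow> real) \<Rightarrow> real ^ 'n::finite ^ 'm::finite \<Rightarrow> bool" where
  "psi_approximable_matrix \<psi> A \<longleftrightarrow>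
     infinite {q :: real ^ 'n. q \<in> int_vecs \<and>
        (\<exists>p :: real ^ 'm. p \<in> int_vecs \<and>
           (maxnorm (A *v q + p)) ^ CARD('m) \<le> \<psi> ((maxnorm q) ^ CARD('n)))}"

text \<open>Lambda_A = [[I_m, A],[0, I_n]] Z^(m+n).\<close>
definition lattice_of :: "real ^ 'n::finite ^ 'm::finite \<Rightarrow> (real ^ ('m + 'n)) set" where
  "lattice_of A = {\<chi> k. (case k of Inl i \<Rightarrow> p $ i + (A *v q) $ i | Inr j \<Rightarrow> q $ j)
                    | p q. p \<in> int_vecs \<and> q \<in> int_vecs}"

definition flow :: "real \<Rightarrow> real ^ ('m::finite + 'n::finite) \<Rightarrow> real ^ ('m + 'n)" where
  "flow t v = (\<chi> k. (case k of Inl i \<Rightarrow> exp (t / real CARD('m)) * v $ k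
                              | Inr j \<Rightarrow> exp (- t / real CARD('n)) * v $ k))"

definition Delta :: "(real ^ 'k::finite) set \<Rightarrow> real" where
  "Delta L = Sup {ln (1 / maxnorm v) | v. v \<in> L \<and> v \<noteq> 0}"

definition is_D :: "nat \<Rightarrow> nat \<Rightarrow> (real \<Rightarrow> real) \<Rightarrow> (real \<Rightarrow> real) \<Rightarrow> bool" where
  "is_D m n \<psi> r \<longleftrightarrow>
     (let t0 = - (real n / real (m + n)) * ln (\<psi> 1) in
       continuous_on {t0..} r \<and>
       strict_mono_on {t0..} (\<lambda>t. t - real n * r t) \<and>
       filterlim (\<lambda>t. t - real n * r t) at_top at_top \<and>
       mono_on {t0..} (\<lambda>t. t + real m * r t) \<and>
       (\<forall>t\<ge>t0. \<psi> (exp (t - real n * r t)) = exp (- t - real m * r t)))"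

end

theory Submission
  imports Defs
begin

lemma maxnorm_le_iff: "maxnorm (v::real^'k::finite) \<le> B \<longleftrightarrow> (\<forall>k. \<bar>v$k\<bar> \<le> B)"
  unfolding maxnorm_def by (subst Max_le_iff) auto

lemma abs_le_maxnorm: "\<bar>(v::real^'k::finite)$k\<bar> \<le> maxnorm v"
  unfolding maxnorm_def by (rule Max_ge) auto

lemma maxnorm_nonneg: "0 \<le> maxnorm (v::real^'k::finite)"
  using abs_le_maxnorm[of v] abs_ge_zero order_trans by blast

lemma maxnorm_pos: "(v::real^'k::finite) \<noteq> 0 \<Longrightarrow> 0 < maxnorm v"
proof -
  assume "v \<noteq> 0"
  then obtain k where "v$k \<noteq> 0" by (metis vec_eq_iff zero_index)
  then show ?thesis using abs_le_maxnorm[of v k] by linarith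
qed

lemma upper_le_iff: "upper_norm (v::real^('m::finite+'n::finite)) \<le> B \<longleftrightarrow> (\<forall>i. \<bar>v$Inl i\<bar> \<le> B)"
  unfolding upper_norm_def by (subst Max_le_iff) auto

lemma lower_le_iff: "lower_norm (v::real^('m::finite+'n::finite)) \<le> B \<longleftrightarrow> (\<forall>j. \<bar>v$Inr j\<bar> \<le> B)"
  unfolding lower_norm_def by (subst Max_le_iff) auto

lemma abs_le_upper: "\<bar>(v::real^('m::finite+'n::finite))$Inl i\<bar> \<le> upper_norm v"
  unfolding upper_norm_def by (rule Max_ge) auto

lemma abs_le_lower: "\<bar>(v::real^('m::finite+'n::finite))$Inr j\<bar> \<le> lower_norm v"
  unfolding lower_norm_def by (rule Max_ge) auto

lemma upper_nonneg: "0 \<le> upper_norm (v::real^('m::finite+'n::finite))"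
  using abs_le_upper[of v] abs_ge_zero order_trans by blast

lemma lower_nonneg: "0 \<le> lower_norm (v::real^('m::finite+'n::finite))"
  using abs_le_lower[of v] abs_ge_zero order_trans by blast

lemma all_sum_iff: "(\<forall>k. P k) \<longleftrightarrow> (\<forall>i. P (Inl i)) \<and> (\<forall>j. P (Inr j))"
  by (metis sum.exhaust)

lemma maxnorm_split: "maxnorm (v::real^('m::finite+'n::finite)) \<le> B \<longleftrightarrow> upper_norm v \<le> B \<and> lower_norm v \<le> B"
  unfolding maxnorm_le_iff upper_le_iff lower_le_iff by (rule all_sum_iff)

lemma flow_Inl[simp]: "flow t v $ Inl i = exp (t / real CARD('m)) * v $ Inl i"
  for v :: "real^('m::finite+'n::finite)"
  by (simp add: flow_def)

lemma flow_Inr[simp]: "flow t v $ Inr j = exp (- t / real CARD('n)) * v $ Inr j"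
  for v :: "real^('m::finite+'n::finite)"
  by (simp add: flow_def)

definition mb :: "real^'a::finite^'b::finite \<Rightarrow> real" where
  "mb M = (\<Sum>i\<in>UNIV. \<Sum>j\<in>UNIV. \<bar>M$i$j\<bar>)"

lemma mb_nonneg: "0 \<le> mb M"
  unfolding mb_def by (intro sum_nonneg) auto

lemma mv_bound: "\<bar>(M *v x)$i\<bar> \<le> mb M * maxnorm x"
proof -
  have "\<bar>(M *v x)$i\<bar> = \<bar>\<Sum>j\<in>UNIV. M$i$j * x$j\<bar>"
    by (simp add: matrix_vector_mult_def)
  also have "\<dots> \<le> (\<Sum>j\<in>UNIV. \<bar>M$i$j\<bar> * \<bar>x$j\<bar>)"
    by (rule order_trans[OF sum_abs]) (simp add: abs_mult)
  also have "\<dots> \<le> (\<Sum>j\<in>UNIV. \<bar>M$i$j\<bar> * maxnorm x)"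
    by (intro sum_mono mult_left_mono abs_le_maxnorm) auto
  also have "\<dots> = (\<Sum>j\<in>UNIV. \<bar>M$i$j\<bar>) * maxnorm x"
    by (simp add: sum_distrib_right)
  also have "\<dots> \<le> mb M * maxnorm x"
    unfolding mb_def
    by (intro mult_right_mono maxnorm_nonneg member_le_sum) (auto intro: sum_nonneg)
  finally show ?thesis .
qed

lemma maxnorm_mv: "maxnorm (M *v x) \<le> mb M * maxnorm x"
  using mv_bound maxnorm_le_iff by blast

definition ivec :: "('k::finite \<Rightarrow> int) \<Rightarrow> real^'k" where
  "ivec a = (\<chi> k. real_of_int (a k))"

lemma int_vecs_bounded_finite: "finite {z::real^'k::finite. z \<in> int_vecs \<and> maxnorm z \<le> D}"
proof -
  let ?S = "PiE UNIV (\<lambda>_::'k. {-\<lceil>D\<rceil>..\<lceil>D\<rceil>})"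
  have "{z::real^'k::finite. z \<in> int_vecs \<and> maxnorm z \<le> D} \<subseteq> ivec ` ?S"
  proof
    fix z :: "real^'k" assume z: "z \<in> {z. z \<in> int_vecs \<and> maxnorm z \<le> D}"
    define a where "a = (\<lambda>k. \<lfloor>z$k\<rfloor>)"
    have zi: "z$k \<in> \<int>" for k using z by (auto simp: int_vecs_def)
    have "ivec a = z" unfolding ivec_def a_def
      using zi by (simp add: vec_eq_iff)
    moreover have "a \<in> ?S"
    proof -
      have h: "\<bar>z$k\<bar> \<le> D" for k using z maxnorm_le_iff by blast
      have c: "D \<le> of_int \<lceil>D\<rceil>" by (rule le_of_int_ceiling)
      have "-\<lceil>D\<rceil> \<le> a k \<and> a k \<le> \<lceil>D\<rceil>" for k
      proof
        show "-\<lceil>D\<rceil> \<le> a k" unfolding a_def le_floor_iff using h[of k] c unfolding abs_le_iff by linarith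
        show "a k \<le> \<lceil>D\<rceil>" unfolding a_def floor_le_iff using h[of k] c unfolding abs_le_iff by linarith
      qed
      then show ?thesis by auto
    qed
    ultimately show "z \<in> ivec ` ?S" by blast
  qed
  moreover have "finite (ivec ` ?S)" by (intro finite_imageI finite_PiE) auto
  ultimately show ?thesis by (rule finite_subset)
qed

lemma lattice_bounded_finite:
  fixes g :: "real^'k::finite^'k"
  assumes "g' ** g = mat 1"
  shows "finite {v \<in> (\<lambda>z. g *v z) ` int_vecs. maxnorm v \<le> B}"
proof -
  have "{v \<in> (\<lambda>z. g *v z) ` int_vecs. maxnorm v \<le> B} \<subseteq>
     (\<lambda>z. g *v z) ` {z. z \<in> int_vecs \<and> maxnorm z \<le> mb g' * B}"
  proof
    fix v assume "v \<in> {v \<in> (\<lambda>z. g *v z) ` int_vecs. maxnorm v \<le> B}"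
    then obtain z where z: "z \<in> int_vecs" "v = g *v z" "maxnorm v \<le> B" by auto
    have "z = g' *v v" using z assms by (simp add: matrix_vector_mul_assoc)
    then have "maxnorm z \<le> mb g' * maxnorm v" using maxnorm_mv by metis
    also have "\<dots> \<le> mb g' * B" using z(3) mb_nonneg mult_left_mono by blast
    finally show "v \<in> (\<lambda>z. g *v z) ` {z. z \<in> int_vecs \<and> maxnorm z \<le> mb g' * B}"
      using z by auto
  qed
  moreover have "finite ((\<lambda>z. g *v z) ` {z. z \<in> int_vecs \<and> maxnorm z \<le> mb g' * B})"
    by (rule finite_imageI[OF int_vecs_bounded_finite])
  ultimately show ?thesis by (rule finite_subset)
qed

lemma sup_ge_iff:
  fixes f :: "'a \<Rightarrow> real"
  assumes ne: "W \<noteq> {}" and fin: "\<And>a. finite {w\<in>W. a \<le> f w}"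
  shows "r \<le> Sup (f ` W) \<longleftrightarrow> (\<exists>w\<in>W. r \<le> f w)"
proof
  assume "\<exists>w\<in>W. r \<le> f w"
  then obtain w0 where w0: "w0\<in>W" "r \<le> f w0" by blast
  let ?F = "{w\<in>W. r \<le> f w}"
  have fF: "finite (f ` ?F)" using fin[of r] by auto
  have bdd: "bdd_above (f ` W)"
  proof (rule bdd_aboveI2)
    fix w assume w: "w \<in> W"
    show "f w \<le> Max (f ` ?F)"
    proof (cases "r \<le> f w")
      case True then show ?thesis using w fF by (intro Max_ge) auto
    next
      case False
      have "f w0 \<le> Max (f ` ?F)" using w0 fF by (intro Max_ge) auto
      then show ?thesis using False w0 by linarith
    qed
  qed
  have "f w0 \<le> Sup (f ` W)" using w0 bdd by (intro cSup_upper) auto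
  then show "r \<le> Sup (f ` W)" using w0 by linarith
next
  assume R: "r \<le> Sup (f ` W)"
  show "\<exists>w\<in>W. r \<le> f w"
  proof (rule ccontr)
    assume "\<not> ?thesis"
    then have lt: "\<forall>w\<in>W. f w < r" by auto
    let ?F = "{w\<in>W. r - 1 \<le> f w}"
    let ?S = "insert (r-1) (f ` ?F)"
    have fb: "finite ?S" using fin[of "r-1"] by auto
    have "Max ?S \<in> ?S" using fb by (intro Max_in) auto
    then have blt: "Max ?S < r" using lt by auto
    have "Sup (f ` W) \<le> Max ?S"
    proof (rule cSup_least)
      show "f ` W \<noteq> {}" using ne by auto
      fix x assume "x \<in> f ` W"
      then obtain w where w: "w\<in>W" "x = f w" by auto
      show "x \<le> Max ?S"
      proof (cases "r - 1 \<le> f w")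
        case True then show ?thesis using w fb by (intro Max_ge) auto
      next
        case False
        have "r - 1 \<le> Max ?S" using fb by (intro Max_ge) auto
        then show ?thesis using False w by linarith
      qed
    qed
    then show False using R blt by linarith
  qed
qed

lemma exp_mult_le_iff: "exp (a::real) * y \<le> e \<longleftrightarrow> y \<le> e * exp (-a)"
proof -
  have "exp a * y \<le> e \<longleftrightarrow> y \<le> e / exp a" by (simp add: pos_le_divide_eq mult.commute)
  then show ?thesis by (simp add: exp_minus divide_inverse)
qed

lemma maxnorm_flow_le:
  fixes v :: "real^('m::finite+'n::finite)"
  shows "maxnorm (flow t v) \<le> e \<longleftrightarrow>
    upper_norm v \<le> e * exp (- (t / real CARD('m))) \<and> lower_norm v \<le> e * exp (t / real CARD('n))"
  unfolding maxnorm_split upper_le_iff lower_le_iff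
  by (simp add: abs_mult exp_mult_le_iff)

lemma flow_zero_iff: "flow t v = 0 \<longleftrightarrow> v = 0"
  for v :: "real^('m::finite+'n::finite)"
  by (simp add: vec_eq_iff all_sum_iff[where P="\<lambda>k. flow t v $ k = 0"] all_sum_iff[where P="\<lambda>k. v $ k = 0"])

lemma maxnorm_le_flow:
  fixes v :: "real^('m::finite+'n::finite)"
  shows "maxnorm v \<le> exp \<bar>t\<bar> * maxnorm (flow t v)"
proof -
  have m1: "real CARD('m) \<ge> 1" and n1: "real CARD('n) \<ge> 1"
    by (simp_all add: Suc_leI)
  have a1: "\<bar>t / real CARD('m)\<bar> \<le> \<bar>t\<bar>"
  proof -
    have "\<bar>t\<bar> / real CARD('m) \<le> \<bar>t\<bar> / 1" using m1 by (intro divide_left_mono) auto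
    then show ?thesis by (simp add: abs_divide)
  qed
  have a2: "\<bar>t / real CARD('n)\<bar> \<le> \<bar>t\<bar>"
  proof -
    have "\<bar>t\<bar> / real CARD('n) \<le> \<bar>t\<bar> / 1" using n1 by (intro divide_left_mono) auto
    then show ?thesis by (simp add: abs_divide)
  qed
  have key: "\<bar>x\<bar> \<le> exp \<bar>t\<bar> * \<bar>c * x\<bar>" if "1 \<le> exp \<bar>t\<bar> * c" "c > 0" for c x
  proof -
    have "\<bar>x\<bar> \<le> (exp \<bar>t\<bar> * c) * \<bar>x\<bar>" using that by (simp add: mult_le_cancel_right1)
    then show ?thesis using that by (simp add: abs_mult mult.assoc)
  qed
  have "0 \<le> \<bar>t\<bar> + t / real CARD('m)" using a1 abs_ge_minus_self[of "t / real CARD('m)"] by linarith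
  then have c1: "1 \<le> exp \<bar>t\<bar> * exp (t / real CARD('m))"
    by (simp add: mult_exp_exp)
  have "0 \<le> \<bar>t\<bar> + - t / real CARD('n)" using a2 abs_ge_self[of "t / real CARD('n)"] by simp
  then have c2: "1 \<le> exp \<bar>t\<bar> * exp (- t / real CARD('n))"
    by (simp add: mult_exp_exp)
  show ?thesis
    unfolding maxnorm_le_iff all_sum_iff[where P="\<lambda>k. \<bar>v $ k\<bar> \<le> _"]
  proof safe
    fix i
    have "\<bar>v$Inl i\<bar> \<le> exp \<bar>t\<bar> * \<bar>flow t v $ Inl i\<bar>" using key[OF c1] by simp
    also have "\<dots> \<le> exp \<bar>t\<bar> * maxnorm (flow t v)" by (intro mult_left_mono abs_le_maxnorm) auto
    finally show "\<bar>v$Inl i\<bar> \<le> exp \<bar>t\<bar> * maxnorm (flow t v)" .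
  next
    fix j
    have "\<bar>v$Inr j\<bar> \<le> exp \<bar>t\<bar> * \<bar>flow t v $ Inr j\<bar>" using key[OF c2] by simp
    also have "\<dots> \<le> exp \<bar>t\<bar> * maxnorm (flow t v)" by (intro mult_left_mono abs_le_maxnorm) auto
    finally show "\<bar>v$Inr j\<bar> \<le> exp \<bar>t\<bar> * maxnorm (flow t v)" .
  qed
qed

lemma ln_inv_ge_iff: "(x::real) > 0 \<Longrightarrow> r \<le> ln (1 / x) \<longleftrightarrow> x \<le> exp (- r)"
proof -
  assume x: "x > 0"
  have "ln (1/x) = ln (inverse x)" by (simp only: inverse_eq_divide)
  then have "ln (1/x) = - ln x" by (simp add: ln_inverse)
  moreover have "x \<le> exp (-r) \<longleftrightarrow> exp (ln x) \<le> exp (-r)" using x by simp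
  moreover have "exp (ln x) \<le> exp (-r) \<longleftrightarrow> ln x \<le> -r" by (rule exp_le_cancel_iff)
  ultimately show ?thesis by linarith
qed

lemma Delta_flow_iff:
  fixes g :: "real^('m::finite+'n::finite)^('m+'n)"
  assumes g': "g' ** g = mat 1"
  shows "r \<le> Delta (flow t ` ((\<lambda>z. g *v z) ` int_vecs)) \<longleftrightarrow>
     (\<exists>v \<in> (\<lambda>z. g *v z) ` int_vecs. v \<noteq> 0 \<and> maxnorm (flow t v) \<le> exp (- r))"
proof -
  define L where "L = (\<lambda>z. g *v z) ` int_vecs"
  define W where "W = flow t ` L - {0}"
  let ?f = "\<lambda>v::real^('m+'n). ln (1 / maxnorm v)"
  have "{ln (1 / maxnorm v) |v. v \<in> flow t ` L \<and> v \<noteq> 0} = ?f ` W"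
    unfolding W_def by blast
  then have D: "Delta (flow t ` L) = Sup (?f ` W)"
    unfolding Delta_def by simp
  have one: "(1::real^('m+'n)) \<in> int_vecs" by (simp add: int_vecs_def)
  have "g' *v (g *v 1) = 1" using g' by (simp add: matrix_vector_mul_assoc)
  then have "g *v 1 \<noteq> 0" by (metis matrix_vector_mult_0_right zero_neq_one)
  then have "flow t (g *v 1) \<noteq> 0" by (simp add: flow_zero_iff)
  moreover have "g *v 1 \<in> L" unfolding L_def using one by (rule imageI)
  ultimately have "flow t (g *v 1) \<in> W" unfolding W_def by simp
  then have ne: "W \<noteq> {}" by auto
  have fin: "finite {w\<in>W. a \<le> ?f w}" for a
  proof -
    have "{w\<in>W. a \<le> ?f w} \<subseteq> flow t ` {v \<in> L. maxnorm v \<le> exp \<bar>t\<bar> * exp (-a)}"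
    proof
      fix w assume w: "w \<in> {w\<in>W. a \<le> ?f w}"
      then obtain v where v: "v \<in> L" "w = flow t v" "w \<noteq> 0" unfolding W_def by auto
      have "maxnorm w > 0" using v(3) by (rule maxnorm_pos)
      moreover have "a \<le> ?f w" using w by simp
      ultimately have mw: "maxnorm w \<le> exp (-a)" using ln_inv_ge_iff by blast
      have "exp \<bar>t\<bar> * maxnorm w \<le> exp \<bar>t\<bar> * exp (-a)" using mw by simp
      moreover have "maxnorm v \<le> exp \<bar>t\<bar> * maxnorm w" using maxnorm_le_flow[of v t] v(2) by simp
      ultimately have "maxnorm v \<le> exp \<bar>t\<bar> * exp (-a)" by linarith
      then show "w \<in> flow t ` {v \<in> L. maxnorm v \<le> exp \<bar>t\<bar> * exp (-a)}" using v by auto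
    qed
    moreover have "finite (flow t ` {v \<in> L. maxnorm v \<le> exp \<bar>t\<bar> * exp (-a)})"
      unfolding L_def by (intro finite_imageI lattice_bounded_finite[OF g'])
    ultimately show ?thesis by (rule finite_subset)
  qed
  have "r \<le> Delta (flow t ` L) \<longleftrightarrow> (\<exists>w\<in>W. r \<le> ?f w)"
    unfolding D by (rule sup_ge_iff[OF ne fin])
  also have "\<dots> \<longleftrightarrow> (\<exists>v \<in> L. v \<noteq> 0 \<and> maxnorm (flow t v) \<le> exp (- r))"
  proof
    assume "\<exists>w\<in>W. r \<le> ?f w"
    then obtain v where v: "v \<in> L" "flow t v \<noteq> 0" "r \<le> ?f (flow t v)" unfolding W_def by auto
    then have "v \<noteq> 0" by (auto simp: flow_zero_iff)
    moreover have "maxnorm (flow t v) > 0" using v(2) by (rule maxnorm_pos)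
    then have "maxnorm (flow t v) \<le> exp (- r)" using v(3) ln_inv_ge_iff by simp
    ultimately show "\<exists>v \<in> L. v \<noteq> 0 \<and> maxnorm (flow t v) \<le> exp (- r)" using v(1) by blast
  next
    assume "\<exists>v \<in> L. v \<noteq> 0 \<and> maxnorm (flow t v) \<le> exp (- r)"
    then obtain v where v: "v \<in> L" "v \<noteq> 0" "maxnorm (flow t v) \<le> exp (- r)" by blast
    then have fv: "flow t v \<noteq> 0" by (simp add: flow_zero_iff)
    then have "maxnorm (flow t v) > 0" by (rule maxnorm_pos)
    then have "r \<le> ?f (flow t v)" using v(3) ln_inv_ge_iff by simp
    moreover have "flow t v \<in> W" unfolding W_def using v(1) fv by simp
    ultimately show "\<exists>w\<in>W. r \<le> ?f w" by blast
  qed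
  finally show ?thesis unfolding L_def .
qed

lemma ivec_int: "ivec a \<in> int_vecs"
  by (simp add: ivec_def int_vecs_def)

lemma floor_eq_close: "\<lfloor>x\<rfloor> = \<lfloor>y\<rfloor> \<Longrightarrow> \<bar>x - y\<bar> < (1::real)"
proof -
  assume e: "\<lfloor>x\<rfloor> = \<lfloor>y\<rfloor>"
  have "real_of_int \<lfloor>x\<rfloor> = real_of_int \<lfloor>y\<rfloor>" using e by simp
  moreover have "real_of_int \<lfloor>x\<rfloor> \<le> x" "x < real_of_int \<lfloor>x\<rfloor> + 1" by (rule of_int_floor_le, rule real_of_int_floor_add_one_gt)
  moreover have "real_of_int \<lfloor>y\<rfloor> \<le> y" "y < real_of_int \<lfloor>y\<rfloor> + 1" by (rule of_int_floor_le, rule real_of_int_floor_add_one_gt)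
  ultimately show ?thesis unfolding abs_less_iff by linarith
qed

lemma dirichlet:
  fixes g :: "real^('m::finite+'n::finite)^('m+'n)"
  assumes g': "g' ** g = mat 1" and rho: "\<rho> > 0"
  shows "\<exists>z\<in>int_vecs. z \<noteq> 0 \<and> (\<forall>i. \<bar>(g *v z)$Inl i\<bar> \<le> \<rho>)"
proof -
  define m where "m = CARD('m)"
  define d where "d = CARD('m+'n)"
  have "d = card ((UNIV::'m set) <+> (UNIV::'n set))" unfolding d_def by simp
  then have "d = m + CARD('n)" unfolding m_def by (simp add: card_Plus del: UNIV_Plus_UNIV)
  then have dm: "m + 1 \<le> d" by (simp add: Suc_leI)
  define C where "C = mb g"
  have C0: "C \<ge> 0" unfolding C_def by (rule mb_nonneg)
  define K where "K = 2*C/\<rho> + 5"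
  have "2*C/\<rho> \<ge> 0" using C0 rho by simp
  then have K0: "K > 0" unfolding K_def by linarith
  define N :: nat where "N = nat \<lceil>K^m\<rceil>"
  have KN: "K^m < real N + 1"
  proof -
    have "K^m \<le> of_int \<lceil>K^m\<rceil>" by (rule le_of_int_ceiling)
    also have "\<dots> \<le> real N" unfolding N_def by simp
    finally show ?thesis by simp
  qed
  define A where "A = PiE (UNIV::('m+'n) set) (\<lambda>_. {0..int N})"
  define M where "M = \<lceil>C * real N / \<rho>\<rceil> + 1"
  define B where "B = PiE (UNIV::'m set) (\<lambda>_. {-M..M})"
  define \<phi> where "\<phi> a = (\<lambda>i. \<lfloor>(g *v ivec a)$Inl i / \<rho>\<rfloor>)" for a
  have cardA: "card A = (N+1)^d"
  proof -
    have e: "nat (int N + 1) = Suc N" using nat_int[of "Suc N"] by (simp add: add.commute)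
    show ?thesis unfolding A_def d_def by (simp add: card_PiE e)
  qed
  have cardB: "card B = nat (2*M+1)^m"
    unfolding B_def m_def by (simp add: card_PiE)
  have finB: "finite B" unfolding B_def by (intro finite_PiE) auto
  have maps: "\<phi> ` A \<subseteq> B"
  proof
    fix b assume "b \<in> \<phi> ` A"
    then obtain a where a: "a \<in> A" "b = \<phi> a" by auto
    have "\<bar>ivec a $ k\<bar> \<le> real N" for k
    proof -
      have ak: "0 \<le> a k" "a k \<le> int N" using a(1) unfolding A_def by (auto simp: PiE_iff)
      then have "real_of_int (a k) \<le> real_of_int (int N)" "0 \<le> real_of_int (a k)"
        by (simp only: of_int_le_iff, simp)
      then show ?thesis unfolding ivec_def by simp
    qed
    then have mn: "maxnorm (ivec a) \<le> real N" using maxnorm_le_iff by blast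
    have "b i \<in> {-M..M}" for i
    proof -
      have "\<bar>(g *v ivec a)$Inl i\<bar> \<le> C * maxnorm (ivec a)" unfolding C_def by (rule mv_bound)
      also have "\<dots> \<le> C * real N" using mn C0 by (rule mult_left_mono)
      finally have h: "\<bar>(g *v ivec a)$Inl i\<bar> / \<rho> \<le> C * real N / \<rho>" using rho by (simp add: divide_right_mono)
      define y where "y = (g *v ivec a)$Inl i / \<rho>"
      have "\<bar>y\<bar> \<le> C * real N / \<rho>" using h rho unfolding y_def by (simp add: abs_divide)
      moreover have "C * real N / \<rho> \<le> of_int \<lceil>C * real N / \<rho>\<rceil>" by (rule le_of_int_ceiling)
      moreover have cM: "real_of_int M = of_int \<lceil>C * real N / \<rho>\<rceil> + 1" unfolding M_def by simp
      ultimately have y1: "of_int (-M) \<le> y" and y2: "y < of_int M + 1"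
        unfolding abs_le_iff of_int_minus by linarith+
      have "b i = \<lfloor>y\<rfloor>" unfolding a(2) \<phi>_def y_def by simp
      moreover have "-M \<le> \<lfloor>y\<rfloor>" by (rule le_floor_iff[THEN iffD2, OF y1])
      moreover have "\<lfloor>y\<rfloor> \<le> M" by (rule floor_le_iff[THEN iffD2, OF y2])
      ultimately show ?thesis by simp
    qed
    then show "b \<in> B" unfolding B_def by auto
  qed
  have lt: "card B < card A"
  proof -
    have M1: "real_of_int M \<le> C * real N / \<rho> + 2"
      unfolding M_def using ceiling_correct[of "C * real N / \<rho>"] by linarith
    have "C * real N / \<rho> \<ge> 0" using C0 rho by simp
    then have "0 \<le> real_of_int \<lceil>C * real N / \<rho>\<rceil>" using le_of_int_ceiling[of "C * real N / \<rho>"] by linarith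
    then have M0: "0 \<le> 2 * M + 1" unfolding M_def by simp
    have "real_of_int (2*M+1) \<le> 2 * (C * real N / \<rho>) + 5" using M1 by simp
    also have "\<dots> \<le> K * (real N + 1)"
    proof -
      define q where "q = 2*C/\<rho>"
      have e1: "2 * (C * real N / \<rho>) = q * real N" unfolding q_def by simp
      have q0: "0 \<le> q" unfolding q_def using C0 rho by simp
      have e2: "K * (real N + 1) = q * real N + q + 5 * real N + 5" unfolding K_def q_def[symmetric]
        by (simp add: algebra_simps)
      show ?thesis unfolding e1 e2 using q0 by simp
    qed
    finally have le1: "real_of_int (2*M+1) \<le> K * (real N + 1)" .
    have "real (card B) = (real_of_int (2*M+1))^m" unfolding cardB using M0 by simp
    also have "\<dots> \<le> (K * (real N + 1))^m" using le1 M0 by (intro power_mono) auto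
    also have "\<dots> = K^m * (real N + 1)^m" by (simp add: power_mult_distrib)
    also have "\<dots> < (real N + 1) * (real N + 1)^m" using KN by (intro mult_strict_right_mono) auto
    also have "\<dots> = (real N + 1)^(m+1)" by simp
    also have "\<dots> \<le> (real N + 1)^d" using dm by (intro power_increasing) auto
    also have "\<dots> = real (card A)" unfolding cardA by (simp add: add.commute)
    finally show ?thesis by simp
  qed
  have "\<not> inj_on \<phi> A"
  proof
    assume "inj_on \<phi> A"
    then have "card A \<le> card B" using card_inj_on_le[OF _ maps finB] by blast
    then show False using lt by simp
  qed
  then obtain a a' where aa: "a \<in> A" "a' \<in> A" "a \<noteq> a'" "\<phi> a = \<phi> a'"
    unfolding inj_on_def by blast
  define z where "z = ivec a - ivec a'"
  have zint: "z \<in> int_vecs" unfolding z_def int_vecs_def ivec_def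
    by (auto simp: Ints_diff)
  from aa(3) obtain k where "a k \<noteq> a' k" by auto
  then have "z $ k \<noteq> 0" unfolding z_def ivec_def by simp
  then have z0: "z \<noteq> 0" by auto
  have "\<bar>(g *v z)$Inl i\<bar> \<le> \<rho>" for i
  proof -
    have e: "\<lfloor>(g *v ivec a)$Inl i / \<rho>\<rfloor> = \<lfloor>(g *v ivec a')$Inl i / \<rho>\<rfloor>"
      using fun_cong[OF aa(4), of i] unfolding \<phi>_def by simp
    have "\<bar>(g *v ivec a)$Inl i / \<rho> - (g *v ivec a')$Inl i / \<rho>\<bar> < 1" by (rule floor_eq_close[OF e])
    then have "\<bar>(g *v ivec a)$Inl i - (g *v ivec a')$Inl i\<bar> / \<rho> < 1"
      using rho by (simp add: diff_divide_distrib[symmetric] abs_divide)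
    then have "\<bar>(g *v ivec a)$Inl i - (g *v ivec a')$Inl i\<bar> < \<rho>" using rho by (simp add: divide_less_eq)
    then show ?thesis unfolding z_def by (simp add: matrix_vector_mult_diff_distrib)
  qed
  then show ?thesis using zint z0 by blast
qed

lemma lattice_scale:
  fixes g :: "real^'k::finite^'k"
  assumes "v \<in> (\<lambda>z. g *v z) ` int_vecs"
  shows "real k *\<^sub>R v \<in> (\<lambda>z. g *v z) ` int_vecs"
proof -
  obtain z where z: "z \<in> int_vecs" "v = g *v z" using assms by auto
  have "real k *\<^sub>R z \<in> int_vecs" using z(1) by (simp add: int_vecs_def)
  moreover have "g *v (real k *\<^sub>R z) = real k *\<^sub>R v" using z(2) by (simp add: matrix_vector_mult_scaleR)
  ultimately show ?thesis by (metis image_eqI)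
qed

lemma lattice_inj:
  fixes g :: "real^'k::finite^'k"
  assumes g': "g' ** g = mat 1" and "z \<noteq> 0"
  shows "g *v z \<noteq> 0"
proof
  assume "g *v z = 0"
  then have "g' *v (g *v z) = 0" by simp
  then show False using assms by (simp add: matrix_vector_mul_assoc)
qed

lemma vertical_unbounded:
  fixes v :: "real^('m::finite+'n::finite)"
  assumes "v \<noteq> 0" "upper_norm v = 0"
  shows "\<exists>k::nat. lower_norm (real k *\<^sub>R v) > R \<and> upper_norm (real k *\<^sub>R v) = 0"
proof -
  have vi: "\<forall>i. v $ Inl i = 0"
  proof
    fix i show "v $ Inl i = 0" using abs_le_upper[of v i] assms(2) by simp
  qed
  obtain k where k: "v $ k \<noteq> 0" using assms(1) by (metis vec_eq_iff zero_index)
  obtain j where j: "v $ Inr j \<noteq> 0"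
  proof (cases k)
    case (Inl i) then show ?thesis using k vi by simp
  next
    case (Inr j) then show ?thesis using k that by simp
  qed
  then have "\<bar>v $ Inr j\<bar> > 0" by simp
  then obtain n :: nat where n: "R < real n * \<bar>v $ Inr j\<bar>" using ex_less_of_nat_mult by blast
  have "real n * \<bar>v $ Inr j\<bar> = \<bar>(real n *\<^sub>R v) $ Inr j\<bar>" by (simp add: abs_mult)
  also have "\<dots> \<le> lower_norm (real n *\<^sub>R v)" by (rule abs_le_lower)
  finally have "R < lower_norm (real n *\<^sub>R v)" using n by linarith
  moreover have "upper_norm (real n *\<^sub>R v) \<le> 0" unfolding upper_le_iff using vi by simp
  then have "upper_norm (real n *\<^sub>R v) = 0" using upper_nonneg by (metis order_antisym)
  ultimately show ?thesis by blast
qed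

lemma small_upper_unbounded:
  fixes g :: "real^('m::finite+'n::finite)^('m+'n)"
  assumes g': "g' ** g = mat 1" and rho: "\<rho> > 0"
  shows "\<exists>v \<in> (\<lambda>z. g *v z) ` int_vecs. upper_norm v \<le> \<rho> \<and> lower_norm v > R"
proof (rule ccontr)
  define L where "L = (\<lambda>z. g *v z) ` int_vecs"
  assume "\<not> ?thesis"
  then have H: "\<And>v. v \<in> L \<Longrightarrow> upper_norm v \<le> \<rho> \<Longrightarrow> lower_norm v \<le> R" unfolding L_def using not_less by blast
  define S where "S = {v \<in> L. v \<noteq> 0 \<and> upper_norm v \<le> \<rho>}"
  have "S \<subseteq> {v \<in> L. maxnorm v \<le> max \<rho> R}"
  proof
    fix v assume "v \<in> S"
    then have "v \<in> L" "upper_norm v \<le> \<rho>" unfolding S_def by auto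
    then have "v \<in> L" "upper_norm v \<le> max \<rho> R" "lower_norm v \<le> max \<rho> R" using H by force+
    then show "v \<in> {v \<in> L. maxnorm v \<le> max \<rho> R}" using maxnorm_split by blast
  qed
  moreover have "finite {v \<in> L. maxnorm v \<le> max \<rho> R}" unfolding L_def by (rule lattice_bounded_finite[OF g'])
  ultimately have finS: "finite S" by (rule finite_subset)
  show False
  proof (cases "\<exists>v\<in>S. upper_norm v = 0")
    case True
    then obtain v where v: "v \<in> S" "upper_norm v = 0" by blast
    then obtain k :: nat where k: "lower_norm (real k *\<^sub>R v) > R" "upper_norm (real k *\<^sub>R v) = 0"
      using vertical_unbounded[of v R] unfolding S_def by blast
    have "real k *\<^sub>R v \<in> L" using v(1) unfolding S_def L_def by (auto intro: lattice_scale)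
    then have "lower_norm (real k *\<^sub>R v) \<le> R" using H k(2) rho by simp
    then show False using k(1) by linarith
  next
    case False
    then have pos: "\<forall>v\<in>S. upper_norm v > 0" using upper_nonneg by (metis order_le_less)
    define \<mu> where "\<mu> = Min (insert \<rho> (upper_norm ` S))"
    have "\<mu> \<in> insert \<rho> (upper_norm ` S)" unfolding \<mu>_def using finS by (intro Min_in) auto
    then have mu0: "\<mu> > 0" using pos rho by auto
    define \<rho>' where "\<rho>' = min \<rho> (\<mu>/2)"
    have "\<rho>' > 0" unfolding \<rho>'_def using mu0 rho by simp
    then obtain z where z: "z \<in> int_vecs" "z \<noteq> 0" "\<forall>i. \<bar>(g *v z)$Inl i\<bar> \<le> \<rho>'"
      using dirichlet[OF g'] by blast
    define v where "v = g *v z"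
    have vL: "v \<in> L" unfolding v_def L_def using z(1) by simp
    have v0: "v \<noteq> 0" unfolding v_def by (rule lattice_inj[OF g' z(2)])
    have uv: "upper_norm v \<le> \<rho>'" unfolding upper_le_iff v_def using z(3) by simp
    then have "v \<in> S" unfolding S_def \<rho>'_def using vL v0 by simp
    then have "\<mu> \<le> upper_norm v" unfolding \<mu>_def using finS by (intro Min_le) auto
    then show False using uv mu0 unfolding \<rho>'_def by linarith
  qed
qed

lemma pow_le_exp_iff:
  assumes "0 \<le> (u::real)" "0 < k"
  shows "u \<le> exp a \<longleftrightarrow> u ^ k \<le> exp (real k * a)"
  using assms by (simp add: exp_of_nat_mult)

lemma le_max_pow: "0 \<le> (u::real) \<Longrightarrow> 0 < k \<Longrightarrow> u \<le> max 1 (u ^ k)"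
proof -
  assume u: "0 \<le> u" and k: "0 < k"
  show ?thesis
  proof (cases "u \<le> 1")
    case False
    then have "u ^ 1 \<le> u ^ k" using k by (intro power_increasing) auto
    then show ?thesis by simp
  qed simp
qed

lemma ge1_pow: "1 \<le> (y::real) \<Longrightarrow> 0 < k \<Longrightarrow> y \<le> y ^ k"
  using power_increasing[of 1 k y] by simp

lemma lower_pos_nonzero:
  fixes v :: "real^('m::finite+'n::finite)"
  shows "0 < lower_norm v \<Longrightarrow> v \<noteq> 0"
proof
  assume a: "0 < lower_norm v" "v = 0"
  then have "lower_norm v \<le> 0" by (simp add: lower_le_iff)
  then show False using a by linarith
qed

lemma G_hits:
  fixes r :: "real \<Rightarrow> real"
  assumes cont: "continuous_on {t0..} r"
    and lim: "filterlim (\<lambda>t. t - n * r t) at_top at_top"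
    and a: "t0 \<le> a" and c: "a - n * r a \<le> c"
  shows "\<exists>t\<ge>a. t - n * r t = c"
proof -
  have "eventually (\<lambda>x. c \<le> x - n * r x) at_top"
    using lim unfolding filterlim_at_top by blast
  then obtain b0 where b0: "\<And>x. x \<ge> b0 \<Longrightarrow> c \<le> x - n * r x"
    unfolding eventually_at_top_linorder by blast
  define b where "b = max a b0"
  have cG: "continuous_on {t0..} (\<lambda>t. t - n * r t)"
    by (intro continuous_on_diff continuous_on_id continuous_on_mult_left cont)
  have "continuous_on {a..b} (\<lambda>t. t - n * r t)"
    using a by (intro continuous_on_subset[OF cG]) auto
  moreover have "c \<le> b - n * r b" using b0 unfolding b_def by simp
  moreover have "a \<le> b" unfolding b_def by simp
  ultimately obtain t where "a \<le> t" "t \<le> b" "t - n * r t = c"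
    using IVT'[of "\<lambda>t. t - n * r t" a c b] c by blast
  then show ?thesis by blast
qed

lemma flow_wit_iff:
  fixes v :: "real^('m::finite+'n::finite)"
  shows "maxnorm (flow t v) \<le> exp (- r) \<longleftrightarrow>
    upper_norm v ^ CARD('m) \<le> exp (- t - real CARD('m) * r) \<and>
    lower_norm v ^ CARD('n) \<le> exp (t - real CARD('n) * r)"
proof -
  have m0: "0 < CARD('m)" and n0: "0 < CARD('n)" by simp_all
  have e1: "exp (- r) * exp (- (t / real CARD('m))) = exp (- r - t / real CARD('m))"
    by (simp add: mult_exp_exp)
  have e2: "exp (- r) * exp (t / real CARD('n)) = exp (- r + t / real CARD('n))"
    by (simp add: mult_exp_exp)
  have e3: "real CARD('m) * (- r - t / real CARD('m)) = - t - real CARD('m) * r"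
    using m0 by (simp add: algebra_simps)
  have e4: "real CARD('n) * (- r + t / real CARD('n)) = t - real CARD('n) * r"
    using n0 by (simp add: algebra_simps)
  show ?thesis
    unfolding maxnorm_flow_le e1 e2
    unfolding pow_le_exp_iff[OF upper_nonneg m0] pow_le_exp_iff[OF lower_nonneg n0] e3 e4 ..
qed

lemma main_equiv:
  fixes g :: "real^('m::finite+'n::finite)^('m+'n)" and \<psi> r :: "real \<Rightarrow> real"
  assumes psi_pos: "\<forall>x\<ge>1. \<psi> x > 0" and psi_noninc: "antimono_on {1..} \<psi>"
    and r_D: "is_D CARD('m) CARD('n) \<psi> r" and g': "g' ** g = mat 1"
  shows "psi_n_approximable \<psi> ((\<lambda>z. g *v z) ` int_vecs) \<longleftrightarrow>
    (\<forall>T. \<exists>t>T. t > 0 \<and> Delta (flow t ` ((\<lambda>z. g *v z) ` int_vecs)) \<ge> r t)"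
proof -
  define L where "L = (\<lambda>z. g *v z) ` int_vecs"
  define cm where "cm = CARD('m)"
  define cn where "cn = CARD('n)"
  have cm0: "0 < cm" and cn0: "0 < cn" unfolding cm_def cn_def by simp_all
  obtain t0 where cont: "continuous_on {t0..} r"
    and lim: "filterlim (\<lambda>t. t - real cn * r t) at_top at_top"
    and hmono: "mono_on {t0..} (\<lambda>t. t + real cm * r t)"
    and eq: "\<And>t. t \<ge> t0 \<Longrightarrow> \<psi> (exp (t - real cn * r t)) = exp (- t - real cm * r t)"
    using r_D unfolding is_D_def Let_def cm_def cn_def by blast
  define W where "W t (v::real^('m+'n)) \<longleftrightarrow> upper_norm v ^ cm \<le> exp (- t - real cm * r t) \<and>
    lower_norm v ^ cn \<le> exp (t - real cn * r t)" for t v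
  have Delta_iff: "r t \<le> Delta (flow t ` L) \<longleftrightarrow> (\<exists>v\<in>L. v \<noteq> 0 \<and> W t v)" for t
    unfolding L_def Delta_flow_iff[OF g'] W_def cm_def cn_def flow_wit_iff ..
  have psi_anti: "\<psi> y \<le> \<psi> x" if "1 \<le> x" "x \<le> y" for x y
    using psi_noninc that unfolding monotone_on_def by auto
  have hm: "exp (- t' - real cm * r t') \<le> exp (- t - real cm * r t)" if "t0 \<le> t" "t \<le> t'" for t t'
  proof -
    have "t + real cm * r t \<le> t' + real cm * r t'"
      using hmono that unfolding monotone_on_def by auto
    then show ?thesis by simp
  qed
  have "psi_n_approximable \<psi> L \<longleftrightarrow> (\<forall>T. \<exists>t>T. t > 0 \<and> (\<exists>v\<in>L. v \<noteq> 0 \<and> W t v))"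
  proof
    assume LHS: "psi_n_approximable \<psi> L"
    show "\<forall>T. \<exists>t>T. t > 0 \<and> (\<exists>v\<in>L. v \<noteq> 0 \<and> W t v)"
    proof
      fix T
      define T' where "T' = max T (max t0 0) + 1"
      define R where "R = max 1 (exp (T' - real cn * r T'))"
      obtain v where v: "v \<in> L" "lower_norm v > R"
        "upper_norm v ^ cm \<le> \<psi> (lower_norm v ^ cn)"
        using LHS unfolding psi_n_approximable_def cm_def cn_def by blast
      define y where "y = lower_norm v"
      have y1: "1 < y" using v(2) unfolding y_def R_def by simp
      have "y \<le> y ^ cn" using y1 cn0 by (intro ge1_pow) auto
      then have yR: "exp (T' - real cn * r T') < y ^ cn" using v(2) unfolding y_def R_def by simp
      have ypos: "0 < y ^ cn" using y1 by simp
      have "T' - real cn * r T' \<le> ln (y ^ cn)"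
        using yR ypos by (metis exp_less_cancel_iff exp_ln less_imp_le)
      moreover have "t0 \<le> T'" unfolding T'_def by simp
      ultimately obtain t where t: "t \<ge> T'" "t - real cn * r t = ln (y ^ cn)"
        using G_hits[OF cont lim] by blast
      have tt0: "t \<ge> t0" using t(1) unfolding T'_def by simp
      have "exp (t - real cn * r t) = y ^ cn" using t(2) ypos by simp
      then have "W t v"
        unfolding W_def using v(3) eq[OF tt0] unfolding y_def by simp
      moreover have "v \<noteq> 0" using y1 unfolding y_def by (intro lower_pos_nonzero) simp
      moreover have "t > T" "t > 0" using t(1) unfolding T'_def by simp_all
      ultimately show "\<exists>t>T. t > 0 \<and> (\<exists>v\<in>L. v \<noteq> 0 \<and> W t v)" using v(1) by blast
    qed
  next
    assume RHS: "\<forall>T. \<exists>t>T. t > 0 \<and> (\<exists>v\<in>L. v \<noteq> 0 \<and> W t v)"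
    show "psi_n_approximable \<psi> L"
    proof (rule ccontr)
      assume "\<not> psi_n_approximable \<psi> L"
      then obtain R0 where R0: "\<And>v. v \<in> L \<Longrightarrow> lower_norm v > R0 \<Longrightarrow> \<psi> (lower_norm v ^ cn) < upper_norm v ^ cm"
        unfolding psi_n_approximable_def cm_def cn_def using not_le by blast
      define R1 where "R1 = max R0 1"
      have claimA: "lower_norm v \<le> R1" if "v \<in> L" "t \<ge> t0" "W t v" for v t
      proof (rule ccontr)
        assume "\<not> lower_norm v \<le> R1"
        then have l: "lower_norm v > R0" "lower_norm v > 1" unfolding R1_def by auto
        have "lower_norm v \<le> lower_norm v ^ cn" using l cn0 by (intro ge1_pow) auto
        then have l1: "1 \<le> lower_norm v ^ cn" using l by simp
        have "\<psi> (exp (t - real cn * r t)) \<le> \<psi> (lower_norm v ^ cn)"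
          using that(3) l1 unfolding W_def by (intro psi_anti) auto
        then have "upper_norm v ^ cm \<le> \<psi> (lower_norm v ^ cn)"
          using that(3) eq[OF that(2)] unfolding W_def by simp
        then show False using R0[OF that(1) l(1)] by simp
      qed
      define U where "U = max 1 (exp (- t0 - real cm * r t0))"
      define B where "B = max R1 U"
      define F where "F = {v \<in> L. maxnorm v \<le> B}"
      have finF: "finite F" unfolding F_def L_def by (rule lattice_bounded_finite[OF g'])
      have inF: "v \<in> F" if "v \<in> L" "t \<ge> t0" "W t v" for v t
      proof -
        have "upper_norm v ^ cm \<le> exp (- t0 - real cm * r t0)"
          using that(3) hm[OF order_refl that(2)] unfolding W_def by linarith
        then have "upper_norm v \<le> U" using le_max_pow[OF upper_nonneg cm0, of v] unfolding U_def by linarith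
        then show ?thesis unfolding F_def B_def using claimA[OF that] that(1) maxnorm_split by fastforce
      qed
      have "\<exists>v\<in>F. v \<noteq> 0 \<and> (\<forall>T. \<exists>t>T. t \<ge> t0 \<and> W t v)"
      proof (rule ccontr)
        assume "\<not> ?thesis"
        then have "\<forall>v\<in>F. \<exists>T. \<forall>t>T. v \<noteq> 0 \<longrightarrow> \<not> (t \<ge> t0 \<and> W t v)" by (meson not_le)
        then obtain Tf where Tf: "\<And>v t. v \<in> F \<Longrightarrow> t > Tf v \<Longrightarrow> v \<noteq> 0 \<Longrightarrow> \<not> (t \<ge> t0 \<and> W t v)"
          by metis
        define Ts where "Ts = Max (insert t0 (Tf ` F))"
        obtain t v where tv: "t > Ts" "v \<in> L" "v \<noteq> 0" "W t v" using RHS by blast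
        have fin: "finite (insert t0 (Tf ` F))" using finF by simp
        have "t0 \<le> Ts" unfolding Ts_def using fin by (intro Max_ge) auto
        then have tt0: "t \<ge> t0" using tv(1) by simp
        have vF: "v \<in> F" using inF[OF tv(2) tt0 tv(4)] .
        have "Tf v \<le> Ts" unfolding Ts_def using fin vF by (intro Max_ge) auto
        then show False using Tf[OF vF _ tv(3)] tv(1) tt0 tv(4) by force
      qed
      then obtain v where v: "v \<in> F" "v \<noteq> 0" "\<And>T. \<exists>t>T. t \<ge> t0 \<and> W t v" by blast
      have vL: "v \<in> L" using v(1) unfolding F_def by simp
      have ub: "upper_norm v ^ cm \<le> exp (- s - real cm * r s)" if "s \<ge> t0" for s
      proof -
        obtain t where t: "t > s" "t \<ge> t0" "W t v" using v(3) by blast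
        show ?thesis using t(3) hm[OF that less_imp_le[OF t(1)]] unfolding W_def by linarith
      qed
      define X where "X = max 1 (exp (t0 - real cn * r t0))"
      have psi_lb: "upper_norm v ^ cm \<le> \<psi> x" if "x \<ge> X" for x
      proof -
        have x0: "x > 0" using that unfolding X_def by simp
        have "exp (t0 - real cn * r t0) \<le> x" using that unfolding X_def by simp
        then have "t0 - real cn * r t0 \<le> ln x" using x0 by (metis exp_le_cancel_iff exp_ln)
        then obtain s where s: "s \<ge> t0" "s - real cn * r s = ln x"
          using G_hits[OF cont lim order_refl] by blast
        have "\<psi> x = \<psi> (exp (s - real cn * r s))" using s(2) x0 by simp
        also have "\<dots> = exp (- s - real cm * r s)" by (rule eq[OF s(1)])
        finally show ?thesis using ub[OF s(1)] by simp
      qed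
      show False
      proof (cases "upper_norm v = 0")
        case True
        obtain k :: nat where k: "lower_norm (real k *\<^sub>R v) > R1" "upper_norm (real k *\<^sub>R v) = 0"
          using vertical_unbounded[OF v(2) True] by blast
        have kL: "real k *\<^sub>R v \<in> L" using vL unfolding L_def by (rule lattice_scale)
        have "1 \<le> lower_norm (real k *\<^sub>R v)" using k(1) unfolding R1_def by simp
        then have "1 \<le> lower_norm (real k *\<^sub>R v) ^ cn" using one_le_power by blast
        then have "\<psi> (lower_norm (real k *\<^sub>R v) ^ cn) > 0" using psi_pos by simp
        moreover have "lower_norm (real k *\<^sub>R v) > R0" using k(1) unfolding R1_def by simp
        ultimately show False using R0[OF kL] k(2) cm0 by (simp add: zero_power)
      next
        case False
        then have u0: "upper_norm v > 0" using upper_nonneg[of v] by simp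
        obtain w where w: "w \<in> L" "upper_norm w \<le> upper_norm v" "lower_norm w > max R1 X"
          using small_upper_unbounded[OF g' u0] unfolding L_def by blast
        have "lower_norm w \<le> lower_norm w ^ cn" using w(3) cn0 unfolding R1_def by (intro ge1_pow) auto
        then have "X \<le> lower_norm w ^ cn" using w(3) by simp
        then have "upper_norm v ^ cm \<le> \<psi> (lower_norm w ^ cn)" by (rule psi_lb)
        moreover have "upper_norm w ^ cm \<le> upper_norm v ^ cm" using w(2) upper_nonneg by (intro power_mono) auto
        moreover have "lower_norm w > R0" using w(3) unfolding R1_def by simp
        ultimately show False using R0[OF w(1)] by simp
      qed
    qed
  qed
  then show ?thesis unfolding L_def[symmetric] Delta_iff by simp
qed

definition Gm :: "real^'n::finite^'m::finite \<Rightarrow> real^('m+'n)^('m+'n)" where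
  "Gm A = (\<chi> k l. case k of
      Inl i \<Rightarrow> (case l of Inl i' \<Rightarrow> (if i = i' then 1 else 0) | Inr j \<Rightarrow> A$i$j)
    | Inr j \<Rightarrow> (case l of Inl i' \<Rightarrow> 0 | Inr j' \<Rightarrow> (if j = j' then 1 else 0)))"

lemma sum_UNIV_Plus: "(\<Sum>l\<in>(UNIV::('a::finite+'b::finite) set). f l) = (\<Sum>i\<in>UNIV. f (Inl i)) + (\<Sum>j\<in>UNIV. f (Inr j))"
proof -
  have "sum f ((UNIV::'a set) <+> (UNIV::'b set)) = sum (f \<circ> Inl) UNIV + sum (f \<circ> Inr) UNIV"
    by (rule sum.Plus) auto
  then show ?thesis by (simp add: o_def)
qed

lemma sum_delta_mult: "(\<Sum>ia\<in>(UNIV::'a::finite set). (if i = ia then 1 else 0) * (f ia::real)) = f i"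
proof -
  have "(\<Sum>ia\<in>UNIV. (if i = ia then 1 else 0) * f ia) = (\<Sum>ia\<in>UNIV. if i = ia then f ia else 0)"
    by (rule sum.cong) auto
  then show ?thesis by simp
qed

lemma Gm_mult: "Gm A *v z = (\<chi> k. case k of Inl i \<Rightarrow> z$Inl i + (A *v (\<chi> j. z$Inr j))$i | Inr j \<Rightarrow> z$Inr j)"
proof -
  have "(Gm A *v z) $ k = (case k of Inl i \<Rightarrow> z$Inl i + (A *v (\<chi> j. z$Inr j))$i | Inr j \<Rightarrow> z$Inr j)" for k
  proof (cases k)
    case (Inl i)
    then show ?thesis
      by (simp add: matrix_vector_mult_def sum_UNIV_Plus Gm_def sum_delta_mult)
  next
    case (Inr j)
    then show ?thesis
      by (simp add: matrix_vector_mult_def sum_UNIV_Plus Gm_def sum_delta_mult)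
  qed
  then show ?thesis by (simp add: vec_eq_iff)
qed

lemma Gm_left_inv: "\<exists>B. B ** Gm A = mat 1"
  unfolding matrix_left_invertible_ker
proof (intro allI impI)
  fix x assume x: "Gm A *v x = 0"
  have xr: "x $ Inr j = 0" for j
    using arg_cong[OF x, of "\<lambda>v. v $ Inr j"] by (simp add: Gm_mult)
  then have "(\<chi> j. x$Inr j) = 0" by (simp add: vec_eq_iff)
  then have xl: "x $ Inl i = 0" for i
    using arg_cong[OF x, of "\<lambda>v. v $ Inl i"] by (simp add: Gm_mult)
  show "x = 0"
  proof (rule vec_eq_iff[THEN iffD2], rule allI)
    fix k show "x $ k = 0 $ k" by (cases k) (simp_all add: xl xr)
  qed
qed

definition joinv :: "real^'m::finite \<Rightarrow> real^'n::finite \<Rightarrow> real^('m+'n)" where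
  "joinv p q = (\<chi> k. case k of Inl i \<Rightarrow> p$i | Inr j \<Rightarrow> q$j)"

lemma lattice_of_eq: "lattice_of A = (\<lambda>z. Gm A *v z) ` int_vecs"
proof
  show "lattice_of A \<subseteq> (\<lambda>z. Gm A *v z) ` int_vecs"
  proof
    fix v assume "v \<in> lattice_of A"
    then obtain p q where pq: "p \<in> int_vecs" "q \<in> int_vecs"
      "v = (\<chi> k. case k of Inl i \<Rightarrow> p $ i + (A *v q) $ i | Inr j \<Rightarrow> q $ j)"
      unfolding lattice_of_def by blast
    have "joinv p q \<in> int_vecs" using pq(1,2) unfolding int_vecs_def joinv_def
      by (auto split: sum.split)
    moreover have "(\<chi> j. joinv p q $ Inr j) = q" by (simp add: joinv_def vec_eq_iff)
    then have "Gm A *v joinv p q = v" unfolding Gm_mult pq(3) by (simp add: joinv_def)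
    ultimately show "v \<in> (\<lambda>z. Gm A *v z) ` int_vecs" by (metis image_eqI)
  qed
next
  show "(\<lambda>z. Gm A *v z) ` int_vecs \<subseteq> lattice_of A"
  proof
    fix v assume "v \<in> (\<lambda>z. Gm A *v z) ` int_vecs"
    then obtain z where z: "z \<in> int_vecs" "v = Gm A *v z" by auto
    define p where "p = (\<chi> i. z $ Inl i)"
    define q where "q = (\<chi> j. z $ Inr j)"
    have "p \<in> int_vecs" "q \<in> int_vecs" using z(1) unfolding p_def q_def int_vecs_def by auto
    moreover have "v = (\<chi> k. case k of Inl i \<Rightarrow> p $ i + (A *v q) $ i | Inr j \<Rightarrow> q $ j)"
      unfolding z(2) Gm_mult p_def q_def by (simp add: vec_eq_iff split: sum.split)
    ultimately show "v \<in> lattice_of A" unfolding lattice_of_def by blast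
  qed
qed

lemma upper_lat: "upper_norm (\<chi> k. case k of Inl i \<Rightarrow> p $ i + (A *v q) $ i | Inr j \<Rightarrow> q $ j) = maxnorm (A *v q + p)"
  unfolding upper_norm_def maxnorm_def by (simp add: add.commute)

lemma lower_lat: "lower_norm (\<chi> k. case k of Inl i \<Rightarrow> p $ i + (A *v q) $ i | Inr j \<Rightarrow> q $ j) = maxnorm q"
  unfolding lower_norm_def maxnorm_def by simp

lemma matrix_equiv:
  fixes A :: "real^'n::finite^'m::finite"
  shows "psi_approximable_matrix \<psi> A \<longleftrightarrow> psi_n_approximable \<psi> (lattice_of A)"
proof -
  define Q where "Q = {q :: real ^ 'n. q \<in> int_vecs \<and>
        (\<exists>p :: real ^ 'm. p \<in> int_vecs \<and>
           (maxnorm (A *v q + p)) ^ CARD('m) \<le> \<psi> ((maxnorm q) ^ CARD('n)))}"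
  have "infinite Q \<longleftrightarrow> psi_n_approximable \<psi> (lattice_of A)"
  proof
    assume inf: "infinite Q"
    show "psi_n_approximable \<psi> (lattice_of A)"
      unfolding psi_n_approximable_def
    proof
      fix R
      have "\<exists>q\<in>Q. maxnorm q > R"
      proof (rule ccontr)
        assume "\<not> ?thesis"
        then have "Q \<subseteq> {z. z \<in> int_vecs \<and> maxnorm z \<le> R}" unfolding Q_def by auto
        then show False using inf int_vecs_bounded_finite finite_subset by blast
      qed
      then obtain q p where qp: "q \<in> int_vecs" "p \<in> int_vecs" "maxnorm q > R"
        "(maxnorm (A *v q + p)) ^ CARD('m) \<le> \<psi> ((maxnorm q) ^ CARD('n))"
        unfolding Q_def by blast
      define v where "v = (\<chi> k. case k of Inl i \<Rightarrow> p $ i + (A *v q) $ i | Inr j \<Rightarrow> q $ j)"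
      have "v \<in> lattice_of A" unfolding lattice_of_def v_def using qp(1,2) by blast
      moreover have "lower_norm v > R" unfolding v_def lower_lat using qp(3) .
      moreover have "upper_norm v ^ CARD('m) \<le> \<psi> (lower_norm v ^ CARD('n))"
        unfolding v_def lower_lat upper_lat using qp(4) .
      ultimately show "\<exists>v\<in>lattice_of A. R < lower_norm v \<and> upper_norm v ^ CARD('m) \<le> \<psi> (lower_norm v ^ CARD('n))"
        by blast
    qed
  next
    assume ap: "psi_n_approximable \<psi> (lattice_of A)"
    show "infinite Q"
    proof
      assume fin: "finite Q"
      define R where "R = Max (insert 0 (maxnorm ` Q))"
      obtain v where v: "v \<in> lattice_of A" "lower_norm v > R" "upper_norm v ^ CARD('m) \<le> \<psi> (lower_norm v ^ CARD('n))"
        using ap unfolding psi_n_approximable_def by blast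
      then obtain p q where pq: "p \<in> int_vecs" "q \<in> int_vecs"
        "v = (\<chi> k. case k of Inl i \<Rightarrow> p $ i + (A *v q) $ i | Inr j \<Rightarrow> q $ j)"
        unfolding lattice_of_def by blast
      have "q \<in> Q" unfolding Q_def using pq v(3) unfolding pq(3) lower_lat upper_lat by blast
      then have "maxnorm q \<le> R" unfolding R_def using fin by (intro Max_ge) auto
      then show False using v(2) unfolding pq(3) lower_lat by simp
    qed
  qed
  then show ?thesis unfolding psi_approximable_matrix_def Q_def .
qed

theorem theorem8p5:
  fixes \<psi> :: "real \<Rightarrow> real" and r :: "real \<Rightarrow> real"
  assumes psi_pos: "\<forall>x\<ge>1. \<psi> x > 0"
    and psi_noninc: "antimono_on {1..} \<psi>"
    and psi_cont: "continuous_on {1..} \<psi>"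
    and r_D: "is_D CARD('m::finite) CARD('n::finite) \<psi> r"
  shows "(\<forall>L :: (real ^ ('m + 'n)) set. unimodular_lattice L \<longrightarrow>
            (psi_n_approximable \<psi> L \<longleftrightarrow>
             (\<forall>T. \<exists>t>T. t > 0 \<and> Delta (flow t ` L) \<ge> r t)))
       \<and> (\<forall>A :: real ^ 'n ^ 'm.
            psi_approximable_matrix \<psi> A \<longleftrightarrow>
             (\<forall>T. \<exists>t>T. t > 0 \<and> Delta (flow t ` lattice_of A) \<ge> r t))"
proof (intro conjI allI impI)
  fix L :: "(real ^ ('m + 'n)) set"
  assume "unimodular_lattice L"
  then obtain g :: "real^('m+'n)^('m+'n)" where g: "\<bar>det g\<bar> = 1" "L = (\<lambda>z. g *v z) ` int_vecs"
    unfolding unimodular_lattice_def by blast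
  have "invertible g" using g(1) by (simp add: invertible_det_nz)
  then obtain g' where g': "g' ** g = mat 1" using invertible_left_inverse by blast
  show "psi_n_approximable \<psi> L \<longleftrightarrow> (\<forall>T. \<exists>t>T. t > 0 \<and> Delta (flow t ` L) \<ge> r t)"
    unfolding g(2) by (rule main_equiv[OF psi_pos psi_noninc r_D g'])
next
  fix A :: "real ^ 'n ^ 'm"
  obtain B where B: "B ** Gm A = mat 1" using Gm_left_inv by blast
  show "psi_approximable_matrix \<psi> A \<longleftrightarrow> (\<forall>T. \<exists>t>T. t > 0 \<and> Delta (flow t ` lattice_of A) \<ge> r t)"
    unfolding matrix_equiv lattice_of_eq by (rule main_equiv[OF psi_pos psi_noninc r_D B])
qed

end
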